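(* Let $\pi$ be a $2$-sortable permutation. Then there exists a sequence of legal operations of the $\mathfrak{D}^2\mathfrak{I}$ machine that sorts $\pi$ and in which every occurrence of $d_0$ (resp. $d_1$, $d_2$) is performed in a configuration where condition ($\gamma$) (resp. ($\beta$), ($\alpha$)) holds.
   Context: The $\mathfrak{D}^2\mathfrak{I}$ machine consists of two decreasing stacks $D_1,D_2$ followed in series by an increasing stack $I$. Elements of $D_1,D_2$ must be in decreasing order from top to bottom (top largest); elements of $I$ in increasing order from top to bottom (top smallest). Operations: $d_0$ pushes the next input element (called $Input$) into $D_1$; $d_1$ moves $Top(D_1)$ to $D_2$; $d_2$ moves $Top(D_2)$ to $I$; $d_3$ pops $Top(I)$ and appends it to the output. An operation is legal if it respects the stack restrictions. A permutation is $2$-sortable if some sequence of legal operations outputs its elements in increasing order. Any comparison involving an empty stack is considered true. Conditions: ($\alpha$) $Top(D_2)<Top(I)$; ($\beta$) $Top(D_2)<Top(D_1)$ and $Top(D_1)<Top(I)$; ($\gamma$) $Top(D_1)<Input$, $Input<Top(I)$, and the sequence of input elements from $Input$ up to the first input element larger than $Top(D_2)$ is increasing. *)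

theory Defs
  imports Main
begin

text \<open>Configurations of the D2I machine. Stacks are lists whose head is the top.
  The output is a list in order of emission.\<close>

record config =
  inp  :: "nat list"
  dst1 :: "nat list"
  dst2 :: "nat list"
  ist  :: "nat list"
  outp :: "nat list"

datatype oper = Op0 | Op1 | Op2 | Op3

definition top_lt :: "nat list \<Rightarrow> nat \<Rightarrow> bool" where
  "top_lt S x = (S = [] \<or> hd S < x)"

definition lt_top :: "nat \<Rightarrow> nat list \<Rightarrow> bool" where
  "lt_top x S = (S = [] \<or> x < hd S)"

text \<open>Legal operations: D1, D2 decreasing top to bottom (top largest),
  I increasing top to bottom (top smallest).\<close>
fun step :: "oper \<Rightarrow> config \<Rightarrow> config option" where
  "step Op0 c = (case inp c of [] \<Rightarrow> None
     | x # r \<Rightarrow> if top_lt (dst1 c) x then Some (c\<lparr>inp := r, dst1 := x # dst1 c\<rparr>) else None)"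
| "step Op1 c = (case dst1 c of [] \<Rightarrow> None
     | x # r \<Rightarrow> if top_lt (dst2 c) x then Some (c\<lparr>dst1 := r, dst2 := x # dst2 c\<rparr>) else None)"
| "step Op2 c = (case dst2 c of [] \<Rightarrow> None
     | x # r \<Rightarrow> if lt_top x (ist c) then Some (c\<lparr>dst2 := r, ist := x # ist c\<rparr>) else None)"
| "step Op3 c = (case ist c of [] \<Rightarrow> None
     | x # r \<Rightarrow> Some (c\<lparr>ist := r, outp := outp c @ [x]\<rparr>))"

fun exec :: "oper list \<Rightarrow> config \<Rightarrow> config option" where
  "exec [] c = Some c"
| "exec (a # os) c = (case step a c of None \<Rightarrow> None | Some c' \<Rightarrow> exec os c')"

definition cond_alpha :: "config \<Rightarrow> bool" where
  "cond_alpha c = (dst2 c = [] \<or> ist c = [] \<or> hd (dst2 c) < hd (ist c))"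

definition cond_beta :: "config \<Rightarrow> bool" where
  "cond_beta c = ((dst2 c = [] \<or> dst1 c = [] \<or> hd (dst2 c) < hd (dst1 c)) \<and>
                  (dst1 c = [] \<or> ist c = [] \<or> hd (dst1 c) < hd (ist c)))"

definition gamma_segment :: "config \<Rightarrow> nat list" where
  "gamma_segment c =
     (let big = (\<lambda>x. top_lt (dst2 c) x)
      in takeWhile (\<lambda>x. \<not> big x) (inp c) @ take 1 (dropWhile (\<lambda>x. \<not> big x) (inp c)))"

definition cond_gamma :: "config \<Rightarrow> bool" where
  "cond_gamma c = (inp c \<noteq> [] \<and> top_lt (dst1 c) (hd (inp c)) \<and> lt_top (hd (inp c)) (ist c)
                   \<and> sorted_wrt (<) (gamma_segment c))"

fun op_cond :: "oper \<Rightarrow> config \<Rightarrow> bool" where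
  "op_cond Op0 c = cond_gamma c"
| "op_cond Op1 c = cond_beta c"
| "op_cond Op2 c = cond_alpha c"
| "op_cond Op3 c = True"

fun exec_guarded :: "oper list \<Rightarrow> config \<Rightarrow> config option" where
  "exec_guarded [] c = Some c"
| "exec_guarded (a # os) c =
     (if op_cond a c then (case step a c of None \<Rightarrow> None | Some c' \<Rightarrow> exec_guarded os c') else None)"

definition init_conf :: "nat list \<Rightarrow> config" where
  "init_conf p = \<lparr>inp = p, dst1 = [], dst2 = [], ist = [], outp = []\<rparr>"

definition sorted_conf :: "nat list \<Rightarrow> config" where
  "sorted_conf p = \<lparr>inp = [], dst1 = [], dst2 = [], ist = [], outp = sort p\<rparr>"

definition is_perm :: "nat list \<Rightarrow> bool" where
  "is_perm p = (distinct p \<and> set p = {1..length p})"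

definition sorts :: "oper list \<Rightarrow> nat list \<Rightarrow> bool" where
  "sorts os p = (exec os (init_conf p) = Some (sorted_conf p))"

definition two_sortable :: "nat list \<Rightarrow> bool" where
  "two_sortable p = (\<exists>os. sorts os p)"

end

theory Submission
  imports Defs
begin

definition allc :: "config \<Rightarrow> nat list" where
  "allc c = inp c @ dst1 c @ dst2 c @ ist c @ outp c"

definition rem :: "config \<Rightarrow> nat set" where
  "rem c = set (inp c) \<union> set (dst1 c) \<union> set (dst2 c) \<union> set (ist c)"

definition minv :: "config \<Rightarrow> bool" where
  "minv c = (distinct (allc c) \<and> sorted_wrt (>) (dst1 c) \<and> sorted_wrt (>) (dst2 c)
            \<and> sorted_wrt (<) (ist c))"

lemma step0: "step Op0 c = Some c' \<longleftrightarrow>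
   (\<exists>a r. inp c = a # r \<and> top_lt (dst1 c) a \<and> c' = c\<lparr>inp := r, dst1 := a # dst1 c\<rparr>)"
  by (auto split: list.splits if_splits)
lemma step1: "step Op1 c = Some c' \<longleftrightarrow>
   (\<exists>a r. dst1 c = a # r \<and> top_lt (dst2 c) a \<and> c' = c\<lparr>dst1 := r, dst2 := a # dst2 c\<rparr>)"
  by (auto split: list.splits if_splits)
lemma step2: "step Op2 c = Some c' \<longleftrightarrow>
   (\<exists>a r. dst2 c = a # r \<and> lt_top a (ist c) \<and> c' = c\<lparr>dst2 := r, ist := a # ist c\<rparr>)"
  by (auto split: list.splits if_splits)
lemma step3: "step Op3 c = Some c' \<longleftrightarrow>
   (\<exists>a r. ist c = a # r \<and> c' = c\<lparr>ist := r, outp := outp c @ [a]\<rparr>)"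
  by (auto split: list.splits if_splits)

lemma exec_Cons_iff: "exec (a # S) c = Some d \<longleftrightarrow> (\<exists>c'. step a c = Some c' \<and> exec S c' = Some d)"
  by (auto split: option.splits)

lemma exec_append: "exec (S1 @ S2) c = (case exec S1 c of None \<Rightarrow> None | Some c' \<Rightarrow> exec S2 c')"
  by (induction S1 arbitrary: c) (auto split: option.splits)

lemma sw_gt_hd: "sorted_wrt (>) l \<Longrightarrow> hd l < (a::nat) \<Longrightarrow> x \<in> set l \<Longrightarrow> x < a"
  by (cases l) auto
lemma sw_lt_hd: "sorted_wrt (<) l \<Longrightarrow> (a::nat) < hd l \<Longrightarrow> x \<in> set l \<Longrightarrow> a < x"
  by (cases l) auto

declare step.simps[simp del] exec.simps(2)[simp del]


lemma sw_gt_cons: "sorted_wrt (>) (b # r) \<Longrightarrow> (a::nat) > b \<Longrightarrow> sorted_wrt (>) (a # b # r)"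
  by auto
lemma sw_lt_cons: "sorted_wrt (<) (b # r) \<Longrightarrow> (a::nat) < b \<Longrightarrow> sorted_wrt (<) (a # b # r)"
  by auto

lemma step_inv: "step op c = Some c' \<Longrightarrow> minv c \<Longrightarrow> minv c'"
  apply (cases op)
  subgoal by (auto simp: step0 minv_def allc_def top_lt_def dest: sw_gt_hd)
  subgoal by (auto simp: step1 minv_def allc_def top_lt_def dest: sw_gt_hd)
  subgoal by (auto simp: step2 minv_def allc_def lt_top_def dest: sw_lt_hd)
  subgoal by (auto simp: step3 minv_def allc_def)
  done

lemma step_set: "step op c = Some c' \<Longrightarrow> set (allc c') = set (allc c) \<and> (\<exists>r. outp c' = outp c @ r)"
  apply (cases op)
  by (auto simp: step0 step1 step2 step3 allc_def)

lemma exec_set: "exec S c = Some d \<Longrightarrow> set (allc d) = set (allc c) \<and> (\<exists>r. outp d = outp c @ r)"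
proof (induction S arbitrary: c)
  case Nil then show ?case by auto
next
  case (Cons a S)
  then obtain c' where s: "step a c = Some c'" "exec S c' = Some d" using Cons.prems by (auto simp: exec_Cons_iff)
  from Cons.IH[OF s(2)] step_set[OF s(1)] show ?case by auto
qed

lemma exec_inv: "exec S c = Some d \<Longrightarrow> minv c \<Longrightarrow> minv d"
proof (induction S arbitrary: c)
  case Nil then show ?case by auto
next
  case (Cons a S)
  then obtain c' where s: "step a c = Some c'" "exec S c' = Some d" using Cons.prems by (auto simp: exec_Cons_iff)
  with Cons step_inv show ?case by blast
qed

lemma hd_le_lt: "sorted_wrt (<) l \<Longrightarrow> z \<in> set l \<Longrightarrow> hd l \<le> (z::nat)"
  by (cases l) auto
lemma hd_ge_gt: "sorted_wrt (>) l \<Longrightarrow> z \<in> set l \<Longrightarrow> (z::nat) \<le> hd l"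
  by (cases l) auto

lemma comm03: "step Op0 c = Some c1 \<Longrightarrow> step Op3 c1 = Some c2 \<Longrightarrow> \<exists>c3. step Op3 c = Some c3 \<and> step Op0 c3 = Some c2"
  by (auto simp: step0 step3)
lemma comm13: "step Op1 c = Some c1 \<Longrightarrow> step Op3 c1 = Some c2 \<Longrightarrow> \<exists>c3. step Op3 c = Some c3 \<and> step Op1 c3 = Some c2"
  by (auto simp: step1 step3)
lemma comm02: "step Op0 c = Some c1 \<Longrightarrow> step Op2 c1 = Some c2 \<Longrightarrow> \<exists>c3. step Op2 c = Some c3 \<and> step Op0 c3 = Some c2"
  by (auto simp: step0 step2)

lemma lemB: "o' \<in> {Op2, Op3} \<Longrightarrow> exec (replicate k Op0 @ o' # rest) c = Some d \<Longrightarrow> exec (o' # replicate k Op0 @ rest) c = Some d"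
proof (induction k arbitrary: c)
  case 0 then show ?case by simp
next
  case (Suc k)
  then obtain c1 where s1: "step Op0 c = Some c1" "exec (replicate k Op0 @ o' # rest) c1 = Some d"
    by (auto simp: exec_Cons_iff)
  from Suc.IH[OF Suc.prems(1) s1(2)] obtain c2 where s2: "step o' c1 = Some c2" "exec (replicate k Op0 @ rest) c2 = Some d"
    by (auto simp: exec_Cons_iff)
  obtain c3 where s3: "step o' c = Some c3" "step Op0 c3 = Some c2"
    using Suc.prems(1) comm02[OF s1(1)] comm03[OF s1(1)] s2(1) by auto
  show ?case using s3 s2(2) by (auto simp: exec_Cons_iff)
qed

definition P1 :: "config \<Rightarrow> bool" where
  "P1 c = (\<exists>y z w. y \<in> set (dst2 c) \<and> z \<in> set (ist c) \<and>
      w \<in> set (inp c) \<union> set (dst1 c) \<union> set (dst2 c) \<and> w < z \<and> z < y)"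
definition P2 :: "config \<Rightarrow> bool" where
  "P2 c = (\<exists>x z w. x \<in> set (dst1 c) \<and> z \<in> set (ist c) \<and>
      w \<in> set (inp c) \<union> set (dst1 c) \<and> w < z \<and> z < x)"

lemma seg_single: "inp c = x # r \<Longrightarrow> top_lt (dst2 c) x \<Longrightarrow> gamma_segment c = [x]"
  by (simp add: gamma_segment_def Let_def)

lemma seg_sorted:
  assumes i: "inp c = x # r" and d: "dst2 c = t # q" and xt: "x < t" and tr: "t \<notin> set r"
    and so: "sorted_wrt (<) (x # takeWhile (\<lambda>a. a < t) r)"
  shows "sorted_wrt (<) (gamma_segment c)"
proof -
  have c1: "takeWhile (\<lambda>a. \<not> t < a) r = takeWhile (\<lambda>a. a < t) r"
    proof (rule takeWhile_cong[OF refl])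
    fix a assume "a \<in> set r" then have "a \<noteq> t" using tr by auto
    then show "(\<not> t < a) = (a < t)" by auto
  qed
  have c2: "dropWhile (\<lambda>a. \<not> t < a) r = dropWhile (\<lambda>a. a < t) r"
    proof (rule dropWhile_cong[OF refl])
    fix a assume "a \<in> set r" then have "a \<noteq> t" using tr by auto
    then show "(\<not> t < a) = (a < t)" by auto
  qed
  have g: "gamma_segment c = (x # takeWhile (\<lambda>a. a < t) r) @ take 1 (dropWhile (\<lambda>a. a < t) r)"
    using i d xt c1 c2 by (simp add: gamma_segment_def Let_def top_lt_def)
  have L: "\<forall>a\<in>set (x # takeWhile (\<lambda>a. a < t) r). a < t"
    using xt by (auto dest: set_takeWhileD)
  have B: "\<forall>b\<in>set (take 1 (dropWhile (\<lambda>a. a < t) r)). t < b"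
  proof (cases "dropWhile (\<lambda>a. a < t) r")
    case Nil then show ?thesis unfolding Nil by simp
  next
    case (Cons b bs)
    have "\<not> b < t" using hd_dropWhile[of "\<lambda>a. a < t" r] Cons by simp
    moreover have "b \<in> set r" using Cons set_dropWhileD[of b "\<lambda>a. a < t" r] by simp
    ultimately have "t < b" using tr by (cases "t = b") auto
    then show ?thesis using Cons by simp
  qed
  have s1: "sorted_wrt (<) (take 1 (dropWhile (\<lambda>a. a < t) r))"
  proof (cases "dropWhile (\<lambda>a. a < t) r")
    case Nil show ?thesis unfolding Nil by simp
  next
    case (Cons b bs) show ?thesis unfolding Cons by simp
  qed
  show ?thesis unfolding g sorted_wrt_append using so s1 L B by fastforce
qed

definition P3 :: "config \<Rightarrow> bool" where
  "P3 c = (\<exists>x z w. x \<in> set (dst1 c) \<and> z \<in> set (ist c) \<and> w \<in> set (dst2 c) \<and> w < z \<and> z < x)"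

definition Q2 :: "config \<Rightarrow> bool" where
  "Q2 c = (\<exists>t q d p. dst2 c = t # q \<and> dst1 c = d # p \<and> d < t \<and>
      \<not> sorted_wrt (<) (d # takeWhile (\<lambda>a. a < t) (inp c)))"

lemma P3_p0: "P3 c \<Longrightarrow> minv c \<Longrightarrow> step Op0 c = Some c' \<Longrightarrow> P3 c'"
proof -
  assume p: "P3 c" and st: "step Op0 c = Some c'"
  obtain x z w where h: "x \<in> set (dst1 c)" "z \<in> set (ist c)" "w \<in> set (dst2 c)" "w < z" "z < x"
    using p unfolding P3_def by blast
  obtain a r where ar: "c' = c\<lparr>inp := r, dst1 := a # dst1 c\<rparr>" using st unfolding step0 by blast
  show "P3 c'" unfolding P3_def using h ar by (intro exI[of _ x] exI[of _ z] exI[of _ w]) simp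
qed

lemma P3_pe: "P3 c \<Longrightarrow> dst1 c \<noteq> []"
  unfolding P3_def by auto

lemma Q2_pe: "Q2 c \<Longrightarrow> dst1 c \<noteq> []"
  unfolding Q2_def by auto

lemma Q2_p1: "Q2 c \<Longrightarrow> step Op1 c = Some c' \<Longrightarrow> False"
  unfolding Q2_def step1 by (auto simp: top_lt_def)

lemma Q2_p0: "Q2 c \<Longrightarrow> minv c \<Longrightarrow> step Op0 c = Some c' \<Longrightarrow> Q2 c'"
proof -
  assume q: "Q2 c" and st: "step Op0 c = Some c'"
  then obtain t q' d p where h: "dst2 c = t # q'" "dst1 c = d # p" "d < t"
      "\<not> sorted_wrt (<) (d # takeWhile (\<lambda>a. a < t) (inp c))" unfolding Q2_def by blast
  from st obtain a r where ar: "inp c = a # r" "top_lt (dst1 c) a" "c' = c\<lparr>inp := r, dst1 := a # dst1 c\<rparr>"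
    unfolding step0 by blast
  have da: "d < a" using ar(2) h(2) by (simp add: top_lt_def)
  show "Q2 c'"
  proof (cases "a < t")
    case True
    have "\<not> sorted_wrt (<) (d # a # takeWhile (\<lambda>a. a < t) r)" using h(4) ar(1) True by simp
    then have "\<not> sorted_wrt (<) (a # takeWhile (\<lambda>a. a < t) r)"
      using da sorted_wrt2[of "(<)" d a "takeWhile (\<lambda>a. a < t) r"] by (auto simp: transp_def)
    then show ?thesis using ar(3) h True unfolding Q2_def by auto
  next
    case False
    then have "takeWhile (\<lambda>a. a < t) (inp c) = []" using ar(1) by simp
    then show ?thesis using h(4) by simp
  qed
qed

definition mu :: "config \<Rightarrow> nat" where
  "mu c = 4 * length (inp c) + 3 * length (dst1 c) + 2 * length (dst2 c) + length (ist c)"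

lemma mu_step: "step op c = Some c' \<Longrightarrow> mu c' < mu c"
  by (cases op) (auto simp: step0 step1 step2 step3 mu_def)

lemma eg_exec: "exec_guarded os c = Some d \<Longrightarrow> exec os c = Some d"
proof (induction os arbitrary: c)
  case Nil then show ?case by simp
next
  case (Cons a os)
  then show ?case by (auto simp: exec_Cons_iff split: if_splits option.splits)
qed

locale fin =
  fixes T :: config
  assumes fT: "inp T = []" "dst1 T = []" "dst2 T = []" "ist T = []" "sorted (outp T)"
begin

definition R :: "config \<Rightarrow> bool" where "R c = (\<exists>S. exec S c = Some T)"

lemma OL:
  assumes "exec S c = Some T" "minv c" "z \<in> set (outp c)" "w \<in> rem c"
  shows "z < w"
proof -
  from exec_set[OF assms(1)] obtain r where s: "set (allc T) = set (allc c)" "outp T = outp c @ r" by blast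
  have "w \<in> set (allc c)" using assms(4) by (auto simp: rem_def allc_def)
  hence "w \<in> set (outp c @ r)" using s fT by (simp add: allc_def)
  moreover have "w \<notin> set (outp c)" using assms(2,4) by (auto simp: minv_def allc_def rem_def)
  ultimately have "w \<in> set r" by auto
  moreover have "sorted (outp c @ r)" using s fT by simp
  ultimately have "z \<le> w" using assms(3) by (auto simp: sorted_append)
  moreover have "z \<noteq> w" using assms(2,3,4) by (auto simp: minv_def allc_def rem_def)
  ultimately show ?thesis by simp
qed

lemma dead: "exec S c = Some T \<Longrightarrow> minv c \<Longrightarrow> P1 c \<or> P2 c \<Longrightarrow> False"
proof (induction S arbitrary: c)
  case Nil then show ?case using fT by (auto simp: P1_def P2_def)
next
  case (Cons a S)
  then obtain c' where s: "step a c = Some c'" "exec S c' = Some T" by (auto simp: exec_Cons_iff)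
  have mc': "minv c'" using step_inv s Cons by blast
  have "P1 c' \<or> P2 c'"
  proof (cases a)
    case Op0
    then obtain b q where bq: "inp c = b # q" "c' = c\<lparr>inp := q, dst1 := b # dst1 c\<rparr>" using s(1) by (auto simp: step0)
    have e1: "set (inp c) \<union> set (dst1 c) = set (inp c') \<union> set (dst1 c')" and e2: "dst2 c = dst2 c'" "ist c = ist c'"
      and e3: "set (dst1 c) \<subseteq> set (dst1 c')" using bq by auto
    from Cons.prems(3) show ?thesis
    proof
      assume "P1 c" then have "P1 c'" unfolding P1_def e1 e2 . then show ?thesis ..
    next
      assume "P2 c" then have "P2 c'" unfolding P2_def e1 e2 using e3 by blast then show ?thesis ..
    qed
  next
    case Op1
    then obtain b q where bq: "dst1 c = b # q" "c' = c\<lparr>dst1 := q, dst2 := b # dst2 c\<rparr>" using s(1) by (auto simp: step1)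
    have sb: "\<forall>x\<in>set q. x < b" using Cons.prems(2) bq by (auto simp: minv_def)
    from Cons.prems(3) show ?thesis
    proof
      assume "P1 c" then show ?thesis using bq by (auto simp: P1_def)
    next
      assume "P2 c"
      then obtain x z w where h: "x \<in> set (dst1 c)" "z \<in> set (ist c)" "w \<in> set (inp c) \<union> set (dst1 c)" "w < z" "z < x"
        unfolding P2_def by blast
      show ?thesis
      proof (cases "x = b")
        case True
        then have "P1 c'" using h bq unfolding P1_def by auto
        then show ?thesis ..
      next
        case False
        then have "w \<noteq> b" using h bq sb by auto
        then have "P2 c'" using h bq False unfolding P2_def by auto
        then show ?thesis ..
      qed
    qed
  next
    case Op2
    then obtain b q where bq: "dst2 c = b # q" "lt_top b (ist c)" "c' = c\<lparr>dst2 := q, ist := b # ist c\<rparr>" using s(1) by (auto simp: step2)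
    have sb: "\<forall>x\<in>set q. x < b" using Cons.prems(2) bq by (auto simp: minv_def)
    have si: "sorted_wrt (<) (ist c)" using Cons.prems(2) by (auto simp: minv_def)
    from Cons.prems(3) show ?thesis
    proof
      assume "P1 c"
      then obtain y z w where h: "y \<in> set (dst2 c)" "z \<in> set (ist c)" "w \<in> set (inp c) \<union> set (dst1 c) \<union> set (dst2 c)" "w < z" "z < y"
        unfolding P1_def by blast
      have "hd (ist c) \<le> z" using hd_le_lt[OF si h(2)] .
      moreover have "ist c \<noteq> []" using h(2) by auto
      ultimately have "b < z" using bq(2) by (auto simp: lt_top_def)
      then have "y \<noteq> b" "w \<noteq> b" using h sb bq by auto
      then have "P1 c'" using h bq unfolding P1_def by auto
      then show ?thesis ..
    next
      assume "P2 c" then show ?thesis using bq by (auto simp: P2_def)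
    qed
  next
    case Op3
    then obtain h r where hr: "ist c = h # r" "c' = c\<lparr>ist := r, outp := outp c @ [h]\<rparr>" using s(1) by (auto simp: step3)
    from Cons.prems(3) show ?thesis
    proof
      assume "P1 c"
      then obtain y z w where h: "y \<in> set (dst2 c)" "z \<in> set (ist c)" "w \<in> set (inp c) \<union> set (dst1 c) \<union> set (dst2 c)" "w < z" "z < y"
        unfolding P1_def by blast
      show ?thesis
      proof (cases "z = h")
        case True
        have "z < w" using OL[OF s(2) mc', of z w] True hr h(3) by (auto simp: rem_def)
        then show ?thesis using h by simp
      next
        case False
        then show ?thesis using h hr unfolding P1_def by auto
      qed
    next
      assume "P2 c"
      then obtain x z w where h: "x \<in> set (dst1 c)" "z \<in> set (ist c)" "w \<in> set (inp c) \<union> set (dst1 c)" "w < z" "z < x"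
        unfolding P2_def by blast
      show ?thesis
      proof (cases "z = h")
        case True
        have "z < w" using OL[OF s(2) mc', of z w] True hr h(3) by (auto simp: rem_def)
        then show ?thesis using h by simp
      next
        case False
        then show ?thesis using h hr unfolding P2_def by auto
      qed
    qed
  qed
  then show ?case using Cons.IH[OF s(2) mc'] by blast
qed

lemma lemA:
  "exec S c = Some T \<Longrightarrow> minv c \<Longrightarrow> ist c = z # r \<Longrightarrow> (\<forall>w\<in>rem c. w \<noteq> z \<longrightarrow> z < w)
   \<Longrightarrow> \<exists>c3. step Op3 c = Some c3 \<and> R c3"
proof (induction S arbitrary: c)
  case Nil then show ?case using fT by auto
next
  case (Cons a S)
  then obtain c' where s: "step a c = Some c'" "exec S c' = Some T" by (auto simp: exec_Cons_iff)
  have mc': "minv c'" using step_inv s Cons by blast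
  show ?case
  proof (cases a)
    case Op3 then show ?thesis using s R_def by auto
  next
    case Op2
    then obtain b q where bq: "dst2 c = b # q" "lt_top b (ist c)" using s step2 by blast
    then have "b < z" using Cons.prems by (simp add: lt_top_def)
    moreover have "b \<in> rem c" using bq by (auto simp: rem_def)
    moreover have "b \<noteq> z" using Cons.prems(2,3) bq by (auto simp: minv_def allc_def)
    ultimately have False using Cons.prems(4) by auto
    then show ?thesis ..
  next
    case Op0
    have e: "ist c' = z # r" "rem c' = rem c" using s(1) Op0 Cons.prems(3) by (auto simp: step0 rem_def)
    have "\<exists>c3. step Op3 c' = Some c3 \<and> R c3"
      using Cons.IH[OF s(2) mc' e(1)] Cons.prems(4) unfolding e(2) by blast
    then obtain c2 S2 where c2: "step Op3 c' = Some c2" "exec S2 c2 = Some T"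
      unfolding R_def by blast
    obtain c3 where "step Op3 c = Some c3" "step Op0 c3 = Some c2" using comm03 s(1) Op0 c2(1) by blast
    then show ?thesis using c2(2) unfolding R_def by (metis exec_Cons_iff)
  next
    case Op1
    have e: "ist c' = z # r" "rem c' = rem c" using s(1) Op1 Cons.prems(3) by (auto simp: step1 rem_def)
    have "\<exists>c3. step Op3 c' = Some c3 \<and> R c3"
      using Cons.IH[OF s(2) mc' e(1)] Cons.prems(4) unfolding e(2) by blast
    then obtain c2 S2 where c2: "step Op3 c' = Some c2" "exec S2 c2 = Some T"
      unfolding R_def by blast
    obtain c3 where "step Op3 c = Some c3" "step Op1 c3 = Some c2" using comm13 s(1) Op1 c2(1) by blast
    then show ?thesis using c2(2) unfolding R_def by (metis exec_Cons_iff)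
  qed
qed

lemma lemBC:
  assumes p0: "\<And>c c'. Q c \<Longrightarrow> minv c \<Longrightarrow> step Op0 c = Some c' \<Longrightarrow> Q c'"
    and p1: "\<And>c c'. Q c \<Longrightarrow> minv c \<Longrightarrow> step Op1 c = Some c' \<Longrightarrow> R c' \<Longrightarrow> False"
    and pe: "\<And>c. Q c \<Longrightarrow> dst1 c \<noteq> []"
    and s: "step Op0 c0 = Some c'" "exec S c' = Some T" "Q c'" "minv c'"
  shows "\<exists>o' c3. o' \<in> {Op2,Op3} \<and> step o' c0 = Some c3 \<and> R c3"
proof -
  have key: "exec S c = Some T \<Longrightarrow> Q c \<Longrightarrow> minv c \<Longrightarrow> \<exists>k o' rest. o' \<in> {Op2,Op3} \<and> S = replicate k Op0 @ o' # rest" for S c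
proof (induction S arbitrary: c)
  case Nil then show ?case using pe fT by auto
next
  case (Cons a S)
  then obtain c' where s: "step a c = Some c'" "exec S c' = Some T" by (auto simp: exec_Cons_iff)
  have mc': "minv c'" using step_inv s Cons by blast
  show ?case
  proof (cases a)
    case Op0
    then obtain k o' rest where "o' \<in> {Op2,Op3}" "S = replicate k Op0 @ o' # rest"
      using Cons.IH[OF s(2) p0[OF Cons.prems(2,3) s(1)[unfolded Op0]] mc'] by blast
    then show ?thesis using Op0 by (intro exI[of _ "Suc k"] exI[of _ o'] exI[of _ rest]) auto
  next
    case Op1 then have False using p1[OF Cons.prems(2,3) s(1)[unfolded Op1]] s(2) unfolding R_def by blast
    then show ?thesis ..
  next
    case Op2 then show ?thesis by (intro exI[of _ 0]) auto
  next
    case Op3 then show ?thesis by (intro exI[of _ 0]) auto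
  qed
qed
  obtain k o' rest where h: "o' \<in> {Op2,Op3}" "S = replicate k Op0 @ o' # rest"
    using key[OF s(2,3,4)] by blast
  have "exec (Op0 # (replicate k Op0 @ o' # rest)) c0 = Some T" unfolding exec_Cons_iff using s(1,2) h(2) by blast
  then have "exec (replicate (Suc k) Op0 @ o' # rest) c0 = Some T" by (simp only: replicate_Suc append_Cons)
  then have "exec (o' # (replicate (Suc k) Op0 @ rest)) c0 = Some T" by (rule lemB[OF h(1)])
  then obtain c3 where "step o' c0 = Some c3" "exec (replicate (Suc k) Op0 @ rest) c3 = Some T"
    unfolding exec_Cons_iff by blast
  then show ?thesis using h(1) unfolding R_def by blast
qed

lemma P3_p1: "P3 c \<Longrightarrow> minv c \<Longrightarrow> step Op1 c = Some c' \<Longrightarrow> R c' \<Longrightarrow> False"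
proof -
  assume p: "P3 c" and m: "minv c" and st: "step Op1 c = Some c'" and r: "R c'"
  obtain x z w where h: "x \<in> set (dst1 c)" "z \<in> set (ist c)" "w \<in> set (dst2 c)" "w < z" "z < x"
    using p unfolding P3_def by blast
  obtain b q where bq: "dst1 c = b # q" "c' = c\<lparr>dst1 := q, dst2 := b # dst2 c\<rparr>"
    using st unfolding step1 by blast
  have "x \<le> b" using hd_ge_gt[of "dst1 c" x] m h(1) bq(1) by (auto simp: minv_def)
  then have "P1 c'" unfolding P1_def using h bq by (intro exI[of _ b] exI[of _ z] exI[of _ w]) auto
  moreover have "minv c'" using step_inv st m by blast
  ultimately show False using dead r unfolding R_def by blast
qed

lemma beta_ok:
  assumes m: "minv c" and st: "step Op1 c = Some c'" and r: "exec S' c' = Some T"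
    and n3: "\<not> (\<exists>c3. step Op3 c = Some c3 \<and> R c3)"
  shows "cond_beta c"
proof -
  obtain y q where yq: "dst1 c = y # q" "top_lt (dst2 c) y" "c' = c\<lparr>dst1 := q, dst2 := y # dst2 c\<rparr>"
    using st unfolding step1 by blast
  have mc': "minv c'" using step_inv st m by blast
  have e: "exec (Op1 # S') c = Some T" using st r by (simp add: exec_Cons_iff)
  have "ist c = [] \<or> y < hd (ist c)"
  proof (rule ccontr)
    assume "\<not> (ist c = [] \<or> y < hd (ist c))"
    then obtain z rr where zr: "ist c = z # rr" "\<not> y < z" by (cases "ist c") auto
    have "y \<noteq> z" using m yq(1) zr(1) by (auto simp: minv_def allc_def)
    then have zy: "z < y" using zr(2) by simp
    show False
    proof (cases "\<exists>w\<in>rem c. w < z")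
      case True
      then obtain w where w: "w \<in> rem c" "w < z" by blast
      have "w \<notin> set (ist c)" using hd_le_lt[of "ist c" w] m zr(1) w(2) by (auto simp: minv_def)
      then have "w \<in> set (inp c') \<union> set (dst1 c') \<union> set (dst2 c')" using w zy yq unfolding rem_def by auto
      then have "P1 c'" unfolding P1_def using zr(1) w(2) zy yq(3) by force
      then show False using dead r mc' by blast
    next
      case False
      then have "\<forall>w\<in>rem c. w \<noteq> z \<longrightarrow> z < w" by auto
      then show False using lemA[OF e m zr(1)] n3 by blast
    qed
  qed
  then show ?thesis using yq unfolding cond_beta_def top_lt_def by auto
qed

lemma gamma_ok:
  assumes m: "minv c" and st: "step Op0 c = Some c'" and r: "exec S' c' = Some T"
    and n3: "\<not> (\<exists>c3. step Op3 c = Some c3 \<and> R c3)"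
    and n2: "\<not> (\<exists>c3. step Op2 c = Some c3 \<and> R c3)"
  shows "cond_gamma c"
proof -
  obtain x r0 where xr: "inp c = x # r0" "top_lt (dst1 c) x" "c' = c\<lparr>inp := r0, dst1 := x # dst1 c\<rparr>"
    using st unfolding step0 by blast
  have mc': "minv c'" using step_inv st m by blast
  have e: "exec (Op0 # S') c = Some T" using st r by (simp add: exec_Cons_iff)
  have noBC: "\<not> Q c'" if p0: "\<And>c c'. Q c \<Longrightarrow> minv c \<Longrightarrow> step Op0 c = Some c' \<Longrightarrow> Q c'"
    and p1: "\<And>c c'. Q c \<Longrightarrow> minv c \<Longrightarrow> step Op1 c = Some c' \<Longrightarrow> R c' \<Longrightarrow> False"
    and pe: "\<And>c. Q c \<Longrightarrow> dst1 c \<noteq> []" for Q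
  proof
    assume q: "Q c'"
    have "\<exists>o' c3. o' \<in> {Op2,Op3} \<and> step o' c = Some c3 \<and> R c3"
      apply (rule lemBC[where Q=Q])
            apply (erule (2) p0)
           apply (erule (3) p1)
          apply (erule pe)
         apply (rule st)
        apply (rule r)
       apply (rule q)
      apply (rule mc')
      done
    then obtain o' c3 where h: "o' \<in> {Op2,Op3}" "step o' c = Some c3" "R c3" by blast
    show False
    proof (cases "o' = Op2")
      case True then show False using h n2 by blast
    next
      case False then have "o' = Op3" using h(1) by simp
      then show False using h n3 by blast
    qed
  qed
  have lt: "lt_top x (ist c)"
  proof (rule ccontr)
    assume "\<not> lt_top x (ist c)"
    then obtain z rr where zr: "ist c = z # rr" "\<not> x < z" by (cases "ist c") (auto simp: lt_top_def)
    have "x \<noteq> z" using m xr(1) zr(1) by (auto simp: minv_def allc_def)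
    then have zx: "z < x" using zr(2) by simp
    show False
    proof (cases "\<exists>w\<in>rem c. w < z")
      case True
      then obtain w where w: "w \<in> rem c" "w < z" by blast
      have "w \<notin> set (ist c)" using hd_le_lt[of "ist c" w] m zr(1) w(2) by (auto simp: minv_def)
      then have wl: "w \<in> set r0 \<union> set (dst1 c) \<or> w \<in> set (dst2 c)" using w zx xr unfolding rem_def by auto
      show False
      proof (cases "w \<in> set r0 \<union> set (dst1 c)")
        case True
        then have "P2 c'" unfolding P2_def using zr(1) w(2) zx xr(3) by (intro exI[of _ x] exI[of _ z] exI[of _ w]) auto
        then show False using dead r mc' by blast
      next
        case False
        then have "w \<in> set (dst2 c)" using wl by blast
        then have "P3 c'" unfolding P3_def using zr(1) w(2) zx xr(3) by (intro exI[of _ x] exI[of _ z] exI[of _ w]) auto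
        moreover have "\<not> P3 c'"
          apply (rule noBC)
            apply (erule (2) P3_p0)
           apply (erule (3) P3_p1)
          apply (erule P3_pe)
          done
        ultimately show False by blast
      qed
    next
      case False
      then have "\<forall>w\<in>rem c. w \<noteq> z \<longrightarrow> z < w" by auto
      then show False using lemA[OF e m zr(1)] n3 by blast
    qed
  qed
  have sg: "sorted_wrt (<) (gamma_segment c)"
  proof (cases "top_lt (dst2 c) x")
    case True
    then show ?thesis using seg_single[OF xr(1)] by simp
  next
    case False
    then obtain t q where tq: "dst2 c = t # q" "\<not> t < x" by (cases "dst2 c") (auto simp: top_lt_def)
    have dist: "x \<noteq> t" "t \<notin> set r0" using m xr(1) tq(1) by (auto simp: minv_def allc_def)
    then have xt: "x < t" using tq(2) by simp
    show ?thesis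
    proof (cases "sorted_wrt (<) (x # takeWhile (\<lambda>a. a < t) r0)")
      case True
      then show ?thesis using seg_sorted[OF xr(1) tq(1) xt dist(2)] by blast
    next
      case False
      then have "Q2 c'" unfolding Q2_def using tq(1) xr(3) xt by auto
      moreover have "\<not> Q2 c'"
        apply (rule noBC)
          apply (erule (2) Q2_p0)
         apply (erule (1) Q2_p1)
        apply (erule Q2_pe)
        done
      ultimately have False by blast
      then show ?thesis ..
    qed
  qed
  show ?thesis unfolding cond_gamma_def using xr(1,2) lt sg by simp
qed

lemma mainstep:
  assumes e: "exec (a # S) c = Some T" and m: "minv c"
  shows "\<exists>op c'. op_cond op c \<and> step op c = Some c' \<and> R c'"
proof -
  obtain c1 where c1: "step a c = Some c1" "exec S c1 = Some T" using e by (auto simp: exec_Cons_iff)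
  show ?thesis
  proof (cases "\<exists>c3. step Op3 c = Some c3 \<and> R c3")
    case True then show ?thesis by (metis op_cond.simps(4))
  next
    case n3: False
    show ?thesis
    proof (cases "\<exists>c3. step Op2 c = Some c3 \<and> R c3")
      case True
      then obtain c3 where "step Op2 c = Some c3" "R c3" by blast
      moreover then have "cond_alpha c" unfolding step2 cond_alpha_def lt_top_def by auto
      ultimately show ?thesis by (metis op_cond.simps(3))
    next
      case n2: False
      show ?thesis
      proof (cases "\<exists>c3. step Op1 c = Some c3 \<and> R c3")
        case True
        then obtain c3 S3 where h: "step Op1 c = Some c3" "exec S3 c3 = Some T" unfolding R_def by blast
        have "cond_beta c" using beta_ok[OF m h n3] .
        then show ?thesis using h unfolding R_def by (metis op_cond.simps(2))
      next
        case n1: False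
        have "a = Op0" using c1 n1 n2 n3 unfolding R_def by (cases a) auto
        then have h: "step Op0 c = Some c1" using c1 by simp
        have "cond_gamma c" using gamma_ok[OF m h c1(2) n3 n2] .
        then show ?thesis using h c1(2) unfolding R_def by (metis op_cond.simps(1))
      qed
    qed
  qed
qed

lemma guarded: "minv c \<Longrightarrow> R c \<Longrightarrow> \<exists>os. exec_guarded os c = Some T"
proof (induction "mu c" arbitrary: c rule: less_induct)
  case less
  obtain S where S: "exec S c = Some T" using less.prems unfolding R_def by blast
  show ?case
  proof (cases S)
    case Nil then show ?thesis using S by (intro exI[of _ "[]"]) simp
  next
    case (Cons a S')
    obtain op c' where h: "op_cond op c" "step op c = Some c'" "R c'" using mainstep S Cons less.prems(1) by blast
    have "minv c'" using step_inv h(2) less.prems(1) by blast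
    then obtain os where "exec_guarded os c' = Some T" using less.hyps[OF mu_step[OF h(2)]] h(3) by blast
    then have "exec_guarded (op # os) c = Some T" using h by simp
    then show ?thesis by blast
  qed
qed

end

theorem mainTheorem9:
  fixes p :: "nat list"
  assumes "is_perm p" and "two_sortable p"
  shows "\<exists>os. sorts os p \<and> exec_guarded os (init_conf p) = Some (sorted_conf p)"
proof -
  interpret fin "sorted_conf p" by unfold_locales (auto simp: sorted_conf_def)
  have m: "minv (init_conf p)" using assms(1) by (simp add: minv_def allc_def init_conf_def is_perm_def)
  have "R (init_conf p)" using assms(2) unfolding two_sortable_def sorts_def R_def by blast
  then obtain os where "exec_guarded os (init_conf p) = Some (sorted_conf p)" using guarded m by blast
  then show ?thesis using eg_exec unfolding sorts_def by blast
qed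

end
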